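(* Let $d_L\geq2$ and let $\lambda=(\lambda_1,\dots,\lambda_{d_L})$ be a Young diagram, i.e. integers with $\lambda_1\geq\lambda_2\geq\cdots\geq\lambda_{d_L}=0$, labeling an irreducible representation of $U(d_L)$ of dimension $$D_\lambda=\prod_{1\leq i<j\leq d_L}\frac{\lambda_i-\lambda_j+j-i}{j-i}.$$ Then $$\binom{d_L-1+\lambda_1}{d_L-1}\leq D_\lambda,$$ the left side being the dimension of the symmetric representation with Young diagram $(\lambda_1,0,\dots,0)$. *)

theory Defs
  imports Complex_Main
begin

definition weyl_dim :: "nat \<Rightarrow> (nat \<Rightarrow> int) \<Rightarrow> real" where
  "weyl_dim d lam = (\<Prod>(i, j) \<in> {(i, j). 1 \<le> i \<and> i < j \<and> j \<le> d}.
      (real_of_int (lam i - lam j) + real j - real i) / (real j - real i))"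

definition young_diagram :: "nat \<Rightarrow> (nat \<Rightarrow> int) \<Rightarrow> bool" where
  "young_diagram d lam \<longleftrightarrow> (\<forall>i. 1 \<le> i \<and> i < d \<longrightarrow> lam (Suc i) \<le> lam i) \<and> lam d = 0"

end

theory Submission
  imports Defs
begin

lemma window_prod:
  fixes l :: "nat \<Rightarrow> real" and m :: nat
  assumes m: "m > 0"
  shows "n \<ge> 1 \<Longrightarrow> (\<forall>i j. 1 \<le> i \<longrightarrow> i \<le> j \<longrightarrow> j \<le> n + m \<longrightarrow> l j \<le> l i) \<Longrightarrow>
    1 + (l 1 - l (n + m)) / m \<le> (\<Prod>i\<in>{1..n}. 1 + (l i - l (i + m)) / m)"
proof (induction n)
  case 0
  then show ?case by simp
next
  case (Suc n)
  show ?case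
  proof (cases "n = 0")
    case True
    then show ?thesis by simp
  next
    case False
    have IH: "1 + (l 1 - l (n + m)) / m \<le> (\<Prod>i\<in>{1..n}. 1 + (l i - l (i + m)) / m)"
      using Suc.IH Suc.prems False by auto
    have mp: "real m > 0" using m by simp
    have a: "0 \<le> (l 1 - l (n + m)) / m"
      using Suc.prems(2) False mp by (auto intro!: divide_nonneg_pos)
    have b: "0 \<le> (l (Suc n) - l (Suc n + m)) / m"
      using Suc.prems(2) mp by (auto intro!: divide_nonneg_pos)
    have pp: "\<And>x y::real. 0 \<le> x \<Longrightarrow> 0 \<le> y \<Longrightarrow> 1 + x + y \<le> (1 + x) * (1 + y)"
    proof -
      fix x y :: real assume "0 \<le> x" "0 \<le> y"
      then have "0 \<le> x * y" by simp
      moreover have "(1 + x) * (1 + y) = 1 + x + y + x * y" by algebra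
      ultimately show "1 + x + y \<le> (1 + x) * (1 + y)" by linarith
    qed
    have c: "l (n + m) \<le> l (Suc n)"
      using Suc.prems(2) m by auto
    have "1 + (l 1 - l (Suc n + m)) / m \<le>
          (1 + (l 1 - l (n + m)) / m) * (1 + (l (Suc n) - l (Suc n + m)) / m)"
    proof -
      have "1 + (l 1 - l (Suc n + m)) / m \<le> 1 + (l 1 - l (n + m)) / m + (l (Suc n) - l (Suc n + m)) / m"
        using c mp by (simp add: divide_simps)
      also have "\<dots> \<le> (1 + (l 1 - l (n + m)) / m) * (1 + (l (Suc n) - l (Suc n + m)) / m)"
        using pp[OF a b] by simp
      finally show ?thesis .
    qed
    also have "\<dots> \<le> (\<Prod>i\<in>{1..n}. 1 + (l i - l (i + m)) / m) * (1 + (l (Suc n) - l (Suc n + m)) / m)"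
      using IH b by (intro mult_right_mono) auto
    also have "\<dots> = (\<Prod>i\<in>{1..Suc n}. 1 + (l i - l (i + m)) / m)"
      by (simp add: prod.cl_ivl_Suc mult.commute)
    finally show ?thesis .
  qed
qed

lemma choose_prod:
  "real ((n + a) choose n) = (\<Prod>m::nat\<in>{1..n}. (real a + real m) / real m)"
proof (induction n)
  case 0
  then show ?case by simp
next
  case (Suc n)
  have "real (Suc n + a choose Suc n) * real (Suc n) = real (Suc (n + a)) * real ((n + a) choose n)"
    using Suc_times_binomial_eq[of "n + a" n] by (metis add_Suc of_nat_mult)
  then have "real (Suc n + a choose Suc n) = real ((n + a) choose n) * ((real a + Suc n) / Suc n)"
    by (simp add: field_simps)
  then show ?case using Suc.IH by (simp add: prod.cl_ivl_Suc)
qed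

theorem lemma7:
  fixes d :: nat and lam :: "nat \<Rightarrow> int"
  assumes "d \<ge> 2" and "young_diagram d lam"
  shows "real ((d - 1 + nat (lam 1)) choose (d - 1)) \<le> weyl_dim d lam"
proof -
  have stp: "\<And>i. 1 \<le> i \<Longrightarrow> i < d \<Longrightarrow> lam (Suc i) \<le> lam i" and ld: "lam d = 0"
    using assms(2) unfolding young_diagram_def by auto
  have monoL: "\<And>i j. 1 \<le> i \<Longrightarrow> i \<le> j \<Longrightarrow> j \<le> d \<Longrightarrow> lam j \<le> lam i"
  proof -
    fix i j :: nat
    assume "1 \<le> i" "i \<le> j" "j \<le> d"
    from \<open>i \<le> j\<close> \<open>j \<le> d\<close> show "lam j \<le> lam i"
    proof (induction j rule: dec_induct)
      case base then show ?case by simp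
    next
      case (step k)
      then show ?case using step.IH \<open>1 \<le> i\<close> stp[of k] by force
    qed
  qed
  define l where "l = (\<lambda>i. real_of_int (lam i))"
  have l1: "l 1 = real (nat (lam 1))"
    using monoL[of 1 d] ld assms(1) unfolding l_def by simp
  define F where "F = (\<lambda>(i::nat, j::nat). (real_of_int (lam i - lam j) + real j - real i) / (real j - real i))"
  define S where "S = Sigma {1..d-1} (\<lambda>m. {1..d-m})"
  define T where "T = {(i, j). 1 \<le> i \<and> i < j \<and> j \<le> d}"
  have bij: "bij_betw (\<lambda>(m, i). (i, i + m)) S T"
    unfolding bij_betw_def S_def T_def
  proof
    show "inj_on (\<lambda>(m, i). (i, i + m)) (SIGMA m:{1..d - 1}. {1..d - m})"
      by (auto simp: inj_on_def)
    show "(\<lambda>(m, i). (i, i + m)) ` (SIGMA m:{1..d - 1}. {1..d - m}) = {(i, j). 1 \<le> i \<and> i < j \<and> j \<le> d}"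
    proof (rule set_eqI, rule iffI)
      fix x assume "x \<in> (\<lambda>(m, i). (i, i + m)) ` (SIGMA m:{1..d - 1}. {1..d - m})"
      then show "x \<in> {(i, j). 1 \<le> i \<and> i < j \<and> j \<le> d}" by auto
    next
      fix x assume "x \<in> {(i, j). 1 \<le> i \<and> i < j \<and> j \<le> d}"
      then obtain i j where x: "x = (i, j)" "1 \<le> i" "i < j" "j \<le> d" by auto
      then have "(j - i, i) \<in> (SIGMA m:{1..d - 1}. {1..d - m})" by auto
      moreover have "x = (\<lambda>(m, i). (i, i + m)) (j - i, i)" using x by auto
      ultimately show "x \<in> (\<lambda>(m, i). (i, i + m)) ` (SIGMA m:{1..d - 1}. {1..d - m})" by blast
    qed
  qed
  have "weyl_dim d lam = prod F T"
    unfolding weyl_dim_def F_def T_def by simp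
  also have "\<dots> = prod (\<lambda>x. F ((\<lambda>(m, i). (i, i + m)) x)) S"
    using prod.reindex_bij_betw[OF bij, of F] by simp
  also have "\<dots> = (\<Prod>m\<in>{1..d-1}. \<Prod>i\<in>{1..d-m}. F (i, i + m))"
    unfolding S_def by (subst prod.Sigma) (auto simp: case_prod_unfold)
  also have "\<dots> = (\<Prod>m\<in>{1..d-1}. \<Prod>i\<in>{1..d-m}. 1 + (l i - l (i + m)) / m)"
  proof (intro prod.cong refl)
    fix m i assume "m \<in> {1..d-1}" "i \<in> {1..d-m}"
    then have "real m > 0" by auto
    then show "F (i, i + m) = 1 + (l i - l (i + m)) / m"
      unfolding F_def l_def by (simp add: field_simps)
  qed
  finally have W: "weyl_dim d lam = (\<Prod>m\<in>{1..d-1}. \<Prod>i\<in>{1..d-m}. 1 + (l i - l (i + m)) / m)" .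
  have "real ((d - 1 + nat (lam 1)) choose (d - 1)) = (\<Prod>m\<in>{1..d-1}. (l 1 + m) / m)"
    using choose_prod[of "d-1" "nat (lam 1)"] l1 by simp
  also have "\<dots> \<le> (\<Prod>m\<in>{1..d-1}. \<Prod>i\<in>{1..d-m}. 1 + (l i - l (i + m)) / m)"
  proof (rule prod_mono, rule conjI)
    fix m assume mm: "m \<in> {1..d-1}"
    then have mp: "real m > 0" by auto
    have l1n: "0 \<le> l 1" using l1 by simp
    show "0 \<le> (l 1 + m) / m" using mp l1n by simp
    have "(l 1 + m) / m = 1 + (l 1 - l (d - m + m)) / m"
      using mm mp ld unfolding l_def by (simp add: field_simps)
    also have "\<dots> \<le> (\<Prod>i\<in>{1..d-m}. 1 + (l i - l (i + m)) / m)"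
      using mm by (intro window_prod) (auto simp: l_def intro: monoL)
    finally show "(l 1 + m) / m \<le> (\<Prod>i\<in>{1..d-m}. 1 + (l i - l (i + m)) / m)" .
  qed
  finally show ?thesis using W by simp
qed

end
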